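(* Fix integers $d\geq 2$ and $n\geq d+2$. For every configuration $X=\{x_i\}_{i\in[n]}$ in the unit sphere $S^{d-1}\subseteq\mathbb{R}^d$, if $\alpha(X)>0$ then $\delta(X)<1$.
   Context: $[n]=\{1,\ldots,n\}$. For a configuration $X=\{x_i\}_{i\in[n]}$ in $S^{d-1}$, $\alpha(X):=\max_{i\neq j}\langle x_i,x_j\rangle$ and $\delta(X):=\min_{j\in[n]}\operatorname{dist}(x_j,\operatorname{conv}\{x_i\}_{i\in[n]\setminus\{j\}})$, with Euclidean distance. *)

theory Defs
  imports "HOL-Analysis.Analysis"
begin

definition cfg_alpha :: "nat \<Rightarrow> (nat \<Rightarrow> 'a::real_inner) \<Rightarrow> real" where
  "cfg_alpha n X = Max {X i \<bullet> X j | i j. i \<in> {1..n} \<and> j \<in> {1..n} \<and> i \<noteq> j}"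

definition cfg_delta :: "nat \<Rightarrow> (nat \<Rightarrow> 'a::euclidean_space) \<Rightarrow> real" where
  "cfg_delta n X = Min ((\<lambda>j. infdist (X j) (convex hull (X ` ({1..n} - {j})))) ` {1..n})"

end

theory Submission
  imports Defs
begin

lemma key_ineq:
  fixes x y :: "'a::real_inner"
  assumes "norm x = 1" "norm y = 1"
    and "\<And>t. 0 \<le> t \<Longrightarrow> t \<le> 1 \<Longrightarrow> 1 \<le> dist x (t *\<^sub>R y)"
  shows "x \<bullet> y \<le> 0"
proof (rule ccontr)
  assume "\<not> x \<bullet> y \<le> 0"
  hence a: "x \<bullet> y > 0" by simp
  have "x \<bullet> y \<le> norm x * norm y" by (rule norm_cauchy_schwarz)
  hence a1: "x \<bullet> y \<le> 1" using assms by simp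
  define a where "a = x \<bullet> y"
  have "1 \<le> dist x (a *\<^sub>R y)" using assms(3)[of a] a a1 a_def by simp
  hence "1 \<le> (dist x (a *\<^sub>R y))^2" by (simp add: one_le_power)
  also have "(dist x (a *\<^sub>R y))^2 = (x - a *\<^sub>R y) \<bullet> (x - a *\<^sub>R y)"
    by (simp add: dist_norm power2_norm_eq_inner)
  also have "\<dots> = x \<bullet> x - 2 * a * (x \<bullet> y) + a * a * (y \<bullet> y)"
    by (simp add: algebra_simps inner_commute)
  also have "\<dots> = 1 - a * a"
  proof -
    have "x \<bullet> x = 1" "y \<bullet> y = 1" using assms(1,2) by (simp_all add: norm_eq_1)
    thus ?thesis using a_def by simp
  qed
  finally show False using a a_def mult_pos_pos[of "x \<bullet> y" "x \<bullet> y"] by (metis diff_ge_0_iff_ge le_diff_eq mult_pos_pos not_le add_le_same_cancel1)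
qed

theorem lemma4:
  fixes X :: "nat \<Rightarrow> real ^ 'd" and n :: nat
  assumes "CARD('d) \<ge> 2"
    and "n \<ge> CARD('d) + 2"
    and "\<And>i. i \<in> {1..n} \<Longrightarrow> norm (X i) = 1"
    and "cfg_alpha n X > 0"
  shows "cfg_delta n X < 1"
proof (rule ccontr)
  assume "\<not> cfg_delta n X < 1"
  hence d1: "cfg_delta n X \<ge> 1" by simp
  have ge: "infdist (X j) (convex hull (X ` ({1..n} - {j}))) \<ge> 1" if "j \<in> {1..n}" for j
  proof -
    have "cfg_delta n X \<le> infdist (X j) (convex hull (X ` ({1..n} - {j})))"
      unfolding cfg_delta_def by (rule Min_le) (use that in auto)
    thus ?thesis using d1 by simp
  qed
  have inj: "inj_on X {1..n}"
  proof (rule inj_onI, rule ccontr)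
    fix i j assume ij: "i \<in> {1..n}" "j \<in> {1..n}" "X i = X j" "i \<noteq> j"
    have "X j \<in> convex hull (X ` ({1..n} - {j}))"
      using ij by (intro hull_inc) (metis DiffI image_eqI singletonD)
    hence "infdist (X j) (convex hull (X ` ({1..n} - {j}))) = 0" by simp
    thus False using ge[OF ij(2)] by simp
  qed
  define c where "c = X ` {1..n}"
  have fc: "finite c" unfolding c_def by simp
  have cc: "card c = n" unfolding c_def using inj by (simp add: card_image)
  have "affine_dependent c"
    by (rule affine_dependent_biggerset) (use fc cc assms(2) in auto)
  then obtain M P where MP: "M \<subseteq> c" "P \<subseteq> c" "M \<inter> P = {}"
      "(convex hull M) \<inter> (convex hull P) \<noteq> {}"
    by (rule Radon)
  then obtain z where z: "z \<in> convex hull M" "z \<in> convex hull P" by blast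
  have Cj: "X ` ({1..n} - {j}) = c - {X j}" if "j \<in> {1..n}" for j
    unfolding c_def using inj_on_image_set_diff[OF inj, of "{1..n}" "{j}"] that by simp
  have far: "1 \<le> dist x w" if xc: "x \<in> c" and wc: "w \<in> convex hull (c - {x})" for x w
  proof -
    obtain j where j: "j \<in> {1..n}" "x = X j" using xc unfolding c_def by blast
    have "1 \<le> infdist x (convex hull (c - {x}))" using ge[OF j(1)] Cj[OF j(1)] j by simp
    also have "\<dots> \<le> dist x w" by (rule infdist_le) (rule wc)
    finally show ?thesis .
  qed
  have n1: "norm x = 1" if "x \<in> c" for x using that assms(3) unfolding c_def by auto
  have "z = 0"
  proof -
    have "M \<subseteq> {y. z \<bullet> y \<le> (z \<bullet> z) / 2}"
    proof
      fix x assume x: "x \<in> M"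
      have "convex hull P \<subseteq> convex hull (c - {x})"
        by (rule hull_mono) (use MP x in auto)
      hence "1 \<le> dist x z" using far[of x z] z MP x by auto
      hence "1 \<le> (dist x z)^2" by (simp add: one_le_power)
      also have "(dist x z)^2 = x \<bullet> x - 2 * (z \<bullet> x) + z \<bullet> z"
        by (simp add: dist_norm power2_norm_eq_inner algebra_simps inner_commute)
      also have "x \<bullet> x = 1" using n1[of x] x MP by (auto simp: norm_eq_1)
      finally show "x \<in> {y. z \<bullet> y \<le> (z \<bullet> z) / 2}" by simp
    qed
    hence "convex hull M \<subseteq> {y. z \<bullet> y \<le> (z \<bullet> z) / 2}"
      by (rule hull_minimal) (rule convex_halfspace_le)
    hence "z \<bullet> z \<le> (z \<bullet> z) / 2" using z by auto
    hence "z \<bullet> z \<le> 0" by simp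
    thus ?thesis using inner_ge_zero[of z] by (metis inner_eq_zero_iff order_antisym)
  qed
  have zero_in: "0 \<in> convex hull (c - {x})" if "x \<in> c" for x
  proof (cases "x \<in> M")
    case True
    hence "convex hull P \<subseteq> convex hull (c - {x})" by (intro hull_mono) (use MP in auto)
    thus ?thesis using z \<open>z = 0\<close> by auto
  next
    case False
    hence "convex hull M \<subseteq> convex hull (c - {x})" by (intro hull_mono) (use MP in auto)
    thus ?thesis using z \<open>z = 0\<close> by auto
  qed
  have nonpos: "x \<bullet> y \<le> 0" if "x \<in> c" "y \<in> c" "x \<noteq> y" for x y
  proof (rule key_ineq)
    show "norm x = 1" "norm y = 1" using n1 that by auto
    fix t :: real assume t: "0 \<le> t" "t \<le> 1"
    have "y \<in> convex hull (c - {x})" using that by (intro hull_inc) auto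
    hence "t *\<^sub>R y + (1 - t) *\<^sub>R 0 \<in> convex hull (c - {x})"
      using convexD[OF convex_convex_hull \<open>y \<in> convex hull (c - {x})\<close> zero_in[OF that(1)], of t "1 - t"] t by simp
    thus "1 \<le> dist x (t *\<^sub>R y)" using far[OF that(1)] by simp
  qed
  define S where "S = {X i \<bullet> X j | i j. i \<in> {1..n} \<and> j \<in> {1..n} \<and> i \<noteq> j}"
  have "S \<subseteq> (\<lambda>(i,j). X i \<bullet> X j) ` ({1..n} \<times> {1..n})" unfolding S_def by auto
  hence fS: "finite S" by (rule finite_subset) simp
  have "X 1 \<bullet> X 2 \<in> S" unfolding S_def using assms(1,2) by force
  hence "S \<noteq> {}" by auto
  hence "Max S \<in> S" using fS by simp
  then obtain i j where ij: "i \<in> {1..n}" "j \<in> {1..n}" "i \<noteq> j" "Max S = X i \<bullet> X j"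
    unfolding S_def by blast
  have "X i \<noteq> X j" using inj ij by (meson inj_on_contraD)
  moreover have "X i \<in> c" "X j \<in> c" unfolding c_def using ij(1,2) by (blast, blast)
  ultimately have "X i \<bullet> X j \<le> 0" using nonpos by blast
  thus False using assms(4) ij unfolding cfg_alpha_def S_def[symmetric] by simp
qed

end
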